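(* Let $(G_n)_{n\in\mathbb{N}}$ be an iteratively constructible family (an $F$-iteration family of $k$-graphs). Then: (1) the families $(G_{\binom{n}{2}})_{n\in\mathbb{N}}$ and $(G_{n^2})_{n\in\mathbb{N}}$ are bi-iteratively constructible (namely an $(id,F,id)$-bi-iteration family and an $(id,F^2,F)$-bi-iteration family, respectively); (2) for every $c\in\mathbb{N}^{+}$ and $d,e\in\mathbb{Z}$ there exists $r\in\mathbb{N}$ such that the family $H_n=G_{c(n+r)^2+d(n+r)+e}$, $n\in\mathbb{N}$, is bi-iteratively constructible.
   Context: A $k$-graph is $G=(V,E;R_1,\dots,R_k)$ where $(V,E)$ is a finite simple graph (its underlying graph) and $R_1,\dots,R_k$ (the labels, possibly empty) partition $V$. Basic operations on $k$-graphs: $Add_i$ adds a new isolated vertex to $R_i$; $\rho_{i\to j}$ moves all vertices of $R_i$ into $R_j$, leaving $R_i$ empty; $\eta_{i,j}$ adds all edges between $R_i$ and $R_j$; for $b\in\mathbb{N}$, $\eta^b_{i,j}$ acts as $\eta_{i,j}$ if $|R_i\cup R_j|\le b$ and otherwise does nothing; $\delta_{i,j}$ removes all edges between $R_i$ and $R_j$. An elementary operation is a finite composition of basic operations; $id$ is the empty composition. A sequence of $k$-graphs is an $F$-iteration family if $G_{n+1}=F(G_n)$ for all $n$ ($G_0$ a $k$-graph, $F$ elementary), and an $(H,F,L)$-bi-iteration family if $G_{n+1}=H(F^n(L(G_n)))$ for all $n$, $F^n$ denoting $n$-fold application. A sequence of graphs is (bi-)iteratively constructible if for some $k$ it is the sequence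 of underlying graphs of an iteration (resp. bi-iteration) family of $k$-graphs. *)

theory Defs
  imports Main
begin

text \<open>A k-graph: vertices are natural numbers; labels are 0..<k (standing for 1..k);
  lab v is the label of vertex v (only meaningful on verts); edges are 2-element sets.\<close>
record kgraph =
  verts :: "nat set"
  edges :: "nat set set"
  lab   :: "nat \<Rightarrow> nat"

definition wf_kgraph :: "nat \<Rightarrow> kgraph \<Rightarrow> bool" where
  "wf_kgraph k G \<longleftrightarrow> finite (verts G)
     \<and> edges G \<subseteq> {{u,v} | u v. u \<in> verts G \<and> v \<in> verts G \<and> u \<noteq> v}
     \<and> (\<forall>v\<in>verts G. lab G v < k)"

definition cls :: "kgraph \<Rightarrow> nat \<Rightarrow> nat set" where
  "cls G i = {v \<in> verts G. lab G v = i}"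

datatype bop = Add nat | Ren nat nat | Eta nat nat | EtaB nat nat nat | Del nat nat

definition between :: "kgraph \<Rightarrow> nat \<Rightarrow> nat \<Rightarrow> nat set set" where
  "between G i j = {{u,v} | u v. u \<in> cls G i \<and> v \<in> cls G j \<and> u \<noteq> v}"

fun apply_bop :: "bop \<Rightarrow> kgraph \<Rightarrow> kgraph" where
  "apply_bop (Add i) G =
     (let x = (LEAST x. x \<notin> verts G) in
      G\<lparr>verts := insert x (verts G), lab := (lab G)(x := i)\<rparr>)"
| "apply_bop (Ren i j) G =
     G\<lparr>lab := (\<lambda>v. if v \<in> verts G \<and> lab G v = i then j else lab G v)\<rparr>"
| "apply_bop (Eta i j) G = G\<lparr>edges := edges G \<union> between G i j\<rparr>"
| "apply_bop (EtaB b i j) G =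
     (if card (cls G i \<union> cls G j) \<le> b then G\<lparr>edges := edges G \<union> between G i j\<rparr> else G)"
| "apply_bop (Del i j) G = G\<lparr>edges := edges G - between G i j\<rparr>"

fun bop_ok :: "nat \<Rightarrow> bop \<Rightarrow> bool" where
  "bop_ok k (Add i) = (i < k)"
| "bop_ok k (Ren i j) = (i < k \<and> j < k)"
| "bop_ok k (Eta i j) = (i < k \<and> j < k)"
| "bop_ok k (EtaB b i j) = (i < k \<and> j < k)"
| "bop_ok k (Del i j) = (i < k \<and> j < k)"

text \<open>An elementary operation is a finite composition of basic operations, given as the list
  of basic operations in order of application; [] is id.\<close>
definition elementary :: "nat \<Rightarrow> bop list \<Rightarrow> bool" where
  "elementary k ops \<longleftrightarrow> (\<forall>b\<in>set ops. bop_ok k b)"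

definition apply_op :: "bop list \<Rightarrow> kgraph \<Rightarrow> kgraph" where
  "apply_op ops G = fold apply_bop ops G"

definition iteration_family :: "nat \<Rightarrow> bop list \<Rightarrow> (nat \<Rightarrow> kgraph) \<Rightarrow> bool" where
  "iteration_family k F G \<longleftrightarrow> wf_kgraph k (G 0) \<and> elementary k F
     \<and> (\<forall>n. G (Suc n) = apply_op F (G n))"

definition bi_iteration_family ::
    "nat \<Rightarrow> bop list \<Rightarrow> bop list \<Rightarrow> bop list \<Rightarrow> (nat \<Rightarrow> kgraph) \<Rightarrow> bool" where
  "bi_iteration_family k H F L G \<longleftrightarrow> wf_kgraph k (G 0)
     \<and> elementary k H \<and> elementary k F \<and> elementary k L
     \<and> (\<forall>n. G (Suc n) = apply_op H ((apply_op F ^^ n) (apply_op L (G n))))"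

type_synonym graph = "nat set \<times> nat set set"

definition underlying :: "kgraph \<Rightarrow> graph" where
  "underlying G = (verts G, edges G)"

definition graph_iso :: "graph \<Rightarrow> graph \<Rightarrow> bool" where
  "graph_iso A B \<longleftrightarrow> (\<exists>f. bij_betw f (fst A) (fst B)
     \<and> (\<forall>u\<in>fst A. \<forall>v\<in>fst A. {u,v} \<in> snd A \<longleftrightarrow> {f u, f v} \<in> snd B))"

definition bi_iteratively_constructible :: "(nat \<Rightarrow> graph) \<Rightarrow> bool" where
  "bi_iteratively_constructible S \<longleftrightarrow>
     (\<exists>k H F L G. bi_iteration_family k H F L G \<and> (\<forall>n. graph_iso (underlying (G n)) (S n)))"

end

theory Submission
  imports Defs
begin

lemma between_sub:
  "between G i j \<subseteq> {{u,v} | u v. u \<in> verts G \<and> v \<in> verts G \<and> u \<noteq> v}"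
  unfolding between_def cls_def by blast

lemma wf_bop:
  assumes "wf_kgraph k G" "bop_ok k b"
  shows "wf_kgraph k (apply_bop b G)"
proof (cases b)
  case (Add i)
  define x where "x = (LEAST x. x \<notin> verts G)"
  have fin: "finite (verts G)" using assms(1) by (simp add: wf_kgraph_def)
  have "\<exists>x. x \<notin> verts G" using fin by (meson ex_new_if_finite infinite_UNIV_nat)
  hence "x \<notin> verts G" unfolding x_def using LeastI_ex[where P="\<lambda>x. x \<notin> verts G"] by blast
  have e: "apply_bop b G = G\<lparr>verts := insert x (verts G), lab := (lab G)(x := i)\<rparr>"
    using Add by (simp add: Let_def x_def)
  have "edges G \<subseteq> {{u,v} | u v. u \<in> insert x (verts G) \<and> v \<in> insert x (verts G) \<and> u \<noteq> v}"
    using assms(1) unfolding wf_kgraph_def by blast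
  then show ?thesis using assms Add \<open>x \<notin> verts G\<close> unfolding wf_kgraph_def e by auto
next
  case (Ren i j)
  then show ?thesis using assms unfolding wf_kgraph_def by auto
next
  case (Eta i j)
  then show ?thesis using assms between_sub[of G i j] unfolding wf_kgraph_def by auto
next
  case (EtaB b i j)
  then show ?thesis using assms between_sub[of G i j] unfolding wf_kgraph_def by auto
next
  case (Del i j)
  then show ?thesis using assms unfolding wf_kgraph_def by auto
qed

lemma wf_fold:
  "wf_kgraph k G \<Longrightarrow> \<forall>b\<in>set ops. bop_ok k b \<Longrightarrow> wf_kgraph k (fold apply_bop ops G)"
  by (induction ops arbitrary: G) (auto simp: wf_bop)

lemma apply_op_append: "apply_op (xs @ ys) = apply_op ys \<circ> apply_op xs"
  unfolding apply_op_def by (rule ext) simp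

lemma apply_op_rep: "apply_op (concat (replicate m F)) = apply_op F ^^ m"
proof (induction m)
  case 0
  then show ?case by (auto simp: apply_op_def)
next
  case (Suc m)
  then show ?case
    by (simp add: apply_op_append funpow_Suc_right del: funpow.simps)
qed

lemma elem_rep: "elementary k F \<Longrightarrow> elementary k (concat (replicate m F))"
  unfolding elementary_def by auto

lemma Gpow:
  assumes "iteration_family k F G"
  shows "G m = (apply_op F ^^ m) (G 0)"
  using assms by (induction m) (auto simp: iteration_family_def)

lemma Gwf:
  assumes "iteration_family k F G"
  shows "wf_kgraph k (G m)"
  using assms
  by (induction m) (auto simp: iteration_family_def apply_op_def elementary_def intro: wf_fold)

lemma Gadd:
  assumes "iteration_family k F G"
  shows "G (a + b) = (apply_op F ^^ a) (G b)"
proof -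
  have "G (a + b) = (apply_op F ^^ (a + b)) (G 0)" by (rule Gpow[OF assms])
  also have "\<dots> = (apply_op F ^^ a) ((apply_op F ^^ b) (G 0))" by (simp only: funpow_add comp_apply)
  also have "\<dots> = (apply_op F ^^ a) (G b)" by (simp only: Gpow[OF assms, of b, symmetric])
  finally show ?thesis .
qed

lemma apply_nil: "apply_op [] x = x" by (simp add: apply_op_def)

lemma iso_refl: "graph_iso X X"
  unfolding graph_iso_def by (rule exI[of _ id]) auto

lemma choose2_Suc: "Suc n choose 2 = (n choose 2) + n"
  by (induction n) (auto simp: numeral_2_eq_2)

theorem mainTheorem13:
  fixes k :: nat and F :: "bop list" and G :: "nat \<Rightarrow> kgraph"
  assumes "iteration_family k F G"
  shows "bi_iteration_family k [] F [] (\<lambda>n. G (n choose 2))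
    \<and> bi_iteration_family k [] (F @ F) F (\<lambda>n. G (n ^ 2))
    \<and> (\<forall>c::nat. c > 0 \<longrightarrow> (\<forall>d e :: int. \<exists>r::nat.
          (\<forall>n::nat. int c * int (n + r) ^ 2 + d * int (n + r) + e \<ge> 0)
        \<and> bi_iteratively_constructible
            (\<lambda>n. underlying (G (nat (int c * int (n + r) ^ 2 + d * int (n + r) + e))))))"
proof (intro conjI allI impI)
  have el: "elementary k F" using assms by (simp add: iteration_family_def)
  have el0: "elementary k []" by (simp add: elementary_def)
  have wf0: "wf_kgraph k (G 0)" using assms by (simp add: iteration_family_def)
  show "bi_iteration_family k [] F [] (\<lambda>n. G (n choose 2))"
    unfolding bi_iteration_family_def
  proof (intro conjI allI)
    show "wf_kgraph k (G (0 choose 2))" using wf0 by (simp add: numeral_2_eq_2)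
    fix n
    have "G (Suc n choose 2) = (apply_op F ^^ n) (G (n choose 2))"
      using Gadd[OF assms, of n "n choose 2"] choose2_Suc[of n] by (metis add.commute)
    then show "G (Suc n choose 2) = apply_op [] ((apply_op F ^^ n) (apply_op [] (G (n choose 2))))"
      by (simp only: apply_nil)
  qed (use el el0 in auto)
  show "bi_iteration_family k [] (F @ F) F (\<lambda>n. G (n ^ 2))"
  proof -
    have "apply_op (F @ F) = apply_op F ^^ 2"
      by (simp add: apply_op_append numeral_2_eq_2)
    moreover have "(Suc n)^2 = 2*n + 1 + n^2" for n by (simp add: power2_eq_square)
    ultimately show ?thesis
      unfolding bi_iteration_family_def using el el0 wf0
    proof (intro conjI allI)
      fix n
      have "G ((Suc n)^2) = (apply_op F ^^ (2*n+1)) (G (n^2))"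
        using Gadd[OF assms, of "2*n+1" "n^2"] \<open>\<And>n. (Suc n)^2 = 2*n + 1 + n^2\<close> by metis
      also have "\<dots> = ((apply_op F ^^ 2) ^^ n) (apply_op F (G (n^2)))"
        by (simp add: funpow_mult funpow_add mult.commute[of 2 n] funpow_swap1)
      finally show "G ((Suc n)^2) = apply_op [] ((apply_op (F @ F) ^^ n) (apply_op F (G (n^2))))"
        using \<open>apply_op (F @ F) = apply_op F ^^ 2\<close> by (simp only: apply_nil)
    qed (use el el0 wf0 in \<open>auto simp: elementary_def\<close>)
  qed
  fix c :: nat and d e :: int
  assume c: "c > 0"
  define p where "p m = int c * int m ^ 2 + d * int m + e" for m
  define r where "r = nat (\<bar>d\<bar> + \<bar>e\<bar>)"
  have pos: "p m \<ge> 0" if "m \<ge> r" for m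
  proof (cases "m = 0")
    case True
    then have "d = 0" "e = 0" using that r_def by auto
    then show ?thesis using True by (simp add: p_def)
  next
    case False
    have m: "int m \<ge> \<bar>d\<bar> + \<bar>e\<bar>" using that r_def by auto
    have "int m * int m \<ge> int m * (\<bar>d\<bar> + \<bar>e\<bar>)" using m by (simp add: mult_left_mono)
    moreover have "int m * \<bar>e\<bar> \<ge> \<bar>e\<bar>" using False by (simp add: mult_right_mono mult_le_cancel_right1)
    moreover have "int c * (int m * int m) \<ge> int m * int m" using c
      by (simp add: mult_le_cancel_right1)
    moreover have "d * int m \<ge> - (int m * \<bar>d\<bar>)"
    proof -
      have "\<bar>d * int m\<bar> = int m * \<bar>d\<bar>" by (simp add: abs_mult)
      then show ?thesis by linarith
    qed
    moreover have "int m * (\<bar>d\<bar> + \<bar>e\<bar>) = int m * \<bar>d\<bar> + int m * \<bar>e\<bar>"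
      by (simp add: distrib_left)
    moreover have "p m = int c * (int m * int m) + d * int m + e" by (simp add: p_def power2_eq_square)
    ultimately show ?thesis by linarith
  qed
  define s where "s = nat (2 * int c * int r + int c + d)"
  have sge: "2 * int c * int r + int c + d \<ge> 0"
  proof -
    have "int r \<ge> \<bar>d\<bar>" using r_def by auto
    moreover have "2 * int c * int r \<ge> 2 * int r" using c by (simp add: mult_le_cancel_right1)
    ultimately show ?thesis by linarith
  qed
  have step: "nat (p (Suc n + r)) = (2*c) * n + s + nat (p (n + r))" for n
  proof -
    have "p (Suc n + r) = p (n + r) + (2 * int c) * int n + (2 * int c * int r + int c + d)"
      unfolding p_def by (simp add: power2_eq_square algebra_simps)
    then show ?thesis using pos[of "n+r"] sge s_def by (simp add: nat_add_distrib nat_mult_distrib)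
  qed
  define G' where "G' n = G (nat (p (n + r)))" for n
  have bi: "bi_iteration_family k [] (concat (replicate (2*c) F)) (concat (replicate s F)) G'"
    unfolding bi_iteration_family_def
  proof (intro conjI allI)
    show "wf_kgraph k (G' 0)" unfolding G'_def by (rule Gwf[OF assms])
    show "elementary k []" by (rule el0)
    show "elementary k (concat (replicate (2 * c) F))" by (rule elem_rep[OF el])
    show "elementary k (concat (replicate s F))" by (rule elem_rep[OF el])
    fix n
    show "G' (Suc n) = apply_op [] ((apply_op (concat (replicate (2 * c) F)) ^^ n)
            (apply_op (concat (replicate s F)) (G' n)))"
    proof -
      have "G' (Suc n) = (apply_op F ^^ ((2*c) * n + s)) (G' n)"
        unfolding G'_def step by (rule Gadd[OF assms])
      also have "\<dots> = ((apply_op F ^^ (2*c)) ^^ n) ((apply_op F ^^ s) (G' n))"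
        by (simp only: funpow_add funpow_mult comp_apply)
      finally show ?thesis by (simp only: apply_op_rep apply_nil)
    qed
  qed
  have isos: "\<forall>n. graph_iso (underlying (G' n))
        (underlying (G (nat (int c * int (n + r) ^ 2 + d * int (n + r) + e))))"
    unfolding G'_def p_def using iso_refl by blast
  have posr: "\<forall>n::nat. int c * int (n + r) ^ 2 + d * int (n + r) + e \<ge> 0"
  proof
    fix n :: nat
    show "int c * int (n + r) ^ 2 + d * int (n + r) + e \<ge> 0"
      using pos[of "n+r"] unfolding p_def by (simp only: le_add2)
  qed
  have bic: "bi_iteratively_constructible
            (\<lambda>n. underlying (G (nat (int c * int (n + r) ^ 2 + d * int (n + r) + e))))"
    unfolding bi_iteratively_constructible_def
    apply (rule exI[of _ k])
    apply (rule exI[of _ "[]"])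
    apply (rule exI[of _ "concat (replicate (2*c) F)"])
    apply (rule exI[of _ "concat (replicate s F)"])
    apply (rule exI[of _ G'])
    using bi isos by (rule conjI)
  show "\<exists>r::nat. (\<forall>n::nat. int c * int (n + r) ^ 2 + d * int (n + r) + e \<ge> 0)
        \<and> bi_iteratively_constructible
            (\<lambda>n. underlying (G (nat (int c * int (n + r) ^ 2 + d * int (n + r) + e))))"
    using posr bic by (rule exI[of _ r, OF conjI])
qed

end
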